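(* Let $(\mathcal{U},f,g,\preccurlyeq)$ be a fault-tolerance partially ordered $(m,n)$-semiring as described in the context, let $k,t$ be positive integers with $k<m$, $t<n$, and let $x_1,\ldots,x_m,y_1,\ldots,y_m,z_1,\ldots,z_n,u_1,\ldots,u_n\in\mathcal{U}$ be disjoint components. (i) If $f(\underbrace{\mathbf{0},\ldots,\mathbf{0}}_{m-k},\underbrace{f(x_1^m),\ldots,f(x_1^m)}_{k})\preccurlyeq f(y_1^m)$, then $f(x_1^m)\preccurlyeq f(y_1^m)$. (ii) If $g(z_1^n)\preccurlyeq g(\underbrace{\mathbf{1},\ldots,\mathbf{1}}_{n-t},\underbrace{g(u_1^n),\ldots,g(u_1^n)}_{t})$, then $g(z_1^n)\preccurlyeq g(u_1^n)$.
   Context: Notation: $x_i^j$ denotes $x_i,\ldots,x_j$. $(\mathcal{U},f,g)$ is an $(m,n)$-semiring: $f$ is an associative $m$-ary and $g$ an associative $n$-ary operation on $\mathcal{U}$ (associativity of a $k$-ary $h$: $h(x_1^{i-1},h(x_i^{k+i-1}),x_{k+i}^{2k-1})=h(x_1^{j-1},h(x_j^{k+j-1}),x_{k+j}^{2k-1})$ for $1\le i\le j\le k$), and $g$ distributes over $f$ in every position. $\mathcal{U}$ is interpreted as a set of systems; $f(x_1^m)$ is the system that fails when any $x_i$ fails, $g(y_1^n)$ the system that fails only when all $y_j$ fail; elements are assumed to be disjoint components (failing independently), which imposes no further algebraic condition. $\mathbf{0}\in\mathcal{U}$ (the always-up system) is an $f$-identity ($f(\mathbf{0},\ldots,x,\ldots,\mathbf{0})=x$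 in every position) and $\mathbf{1}$ (the always-down system) is a $g$-identity; moreover $g(y_1^{j-1},\mathbf{0},y_{j+1}^n)=\mathbf{0}$ and $f(x_1^{i-1},\mathbf{1},x_{i+1}^m)=\mathbf{1}$ for all arguments and positions. $\preccurlyeq$ is a partial order on $\mathcal{U}$ ("fault-tolerance partial order") such that $(\mathcal{U},f,g,\preccurlyeq)$ is a partially ordered $(m,n)$-semiring: $a\preccurlyeq b$ implies $f(x_1^{i-1},a,x_{i+1}^m)\preccurlyeq f(x_1^{i-1},b,x_{i+1}^m)$ and $g(y_1^{j-1},a,y_{j+1}^n)\preccurlyeq g(y_1^{j-1},b,y_{j+1}^n)$ for all arguments and all positions; and $\mathbf{0}\preccurlyeq a\preccurlyeq\mathbf{1}$ for all $a\in\mathcal{U}$. *)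

theory Defs
  imports Main
begin

text \<open>A k-ary operation on a carrier U is modelled as a function on lists, only
  meaningful on lists of length k with entries in U.\<close>

definition lists_in :: "'a set \<Rightarrow> nat \<Rightarrow> 'a list \<Rightarrow> bool" where
  "lists_in U k xs \<longleftrightarrow> length xs = k \<and> set xs \<subseteq> U"

definition nary_closed :: "'a set \<Rightarrow> nat \<Rightarrow> ('a list \<Rightarrow> 'a) \<Rightarrow> bool" where
  "nary_closed U k h \<longleftrightarrow> (\<forall>xs. lists_in U k xs \<longrightarrow> h xs \<in> U)"

text \<open>Associativity: h(x_1^{i-1}, h(x_i^{k+i-1}), x_{k+i}^{2k-1}) is independent of i
  (positions written 0-based here: i < k).\<close>
definition nary_assoc :: "'a set \<Rightarrow> nat \<Rightarrow> ('a list \<Rightarrow> 'a) \<Rightarrow> bool" where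
  "nary_assoc U k h \<longleftrightarrow>
     (\<forall>xs i j. lists_in U (2 * k - 1) xs \<longrightarrow> i \<le> j \<longrightarrow> j < k \<longrightarrow>
        h (take i xs @ [h (take k (drop i xs))] @ drop (k + i) xs) =
        h (take j xs @ [h (take k (drop j xs))] @ drop (k + j) xs))"

definition distrib_over :: "'a set \<Rightarrow> nat \<Rightarrow> nat \<Rightarrow> ('a list \<Rightarrow> 'a) \<Rightarrow> ('a list \<Rightarrow> 'a) \<Rightarrow> bool" where
  "distrib_over U m n f g \<longleftrightarrow>
     (\<forall>ys xs j. lists_in U n ys \<longrightarrow> lists_in U m xs \<longrightarrow> j < n \<longrightarrow>
        g (ys[j := f xs]) = f (map (\<lambda>x. g (ys[j := x])) xs))"

definition mn_semiring :: "'a set \<Rightarrow> nat \<Rightarrow> nat \<Rightarrow> ('a list \<Rightarrow> 'a) \<Rightarrow> ('a list \<Rightarrow> 'a) \<Rightarrow> bool" where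
  "mn_semiring U m n f g \<longleftrightarrow>
     nary_closed U m f \<and> nary_closed U n g \<and> nary_assoc U m f \<and> nary_assoc U n g \<and>
     distrib_over U m n f g"

definition ft_po_semiring ::
  "'a set \<Rightarrow> nat \<Rightarrow> nat \<Rightarrow> ('a list \<Rightarrow> 'a) \<Rightarrow> ('a list \<Rightarrow> 'a) \<Rightarrow> 'a \<Rightarrow> 'a \<Rightarrow> ('a \<Rightarrow> 'a \<Rightarrow> bool) \<Rightarrow> bool" where
  "ft_po_semiring U m n f g zero one le \<longleftrightarrow>
     mn_semiring U m n f g \<and> zero \<in> U \<and> one \<in> U \<and>
     (\<forall>x i. x \<in> U \<longrightarrow> i < m \<longrightarrow> f ((replicate m zero)[i := x]) = x) \<and>
     (\<forall>y j. y \<in> U \<longrightarrow> j < n \<longrightarrow> g ((replicate n one)[j := y]) = y) \<and>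
     (\<forall>ys j. lists_in U n ys \<longrightarrow> j < n \<longrightarrow> g (ys[j := zero]) = zero) \<and>
     (\<forall>xs i. lists_in U m xs \<longrightarrow> i < m \<longrightarrow> f (xs[i := one]) = one) \<and>
     (\<forall>a\<in>U. le a a) \<and>
     (\<forall>a\<in>U. \<forall>b\<in>U. le a b \<longrightarrow> le b a \<longrightarrow> a = b) \<and>
     (\<forall>a\<in>U. \<forall>b\<in>U. \<forall>c\<in>U. le a b \<longrightarrow> le b c \<longrightarrow> le a c) \<and>
     (\<forall>a\<in>U. \<forall>b\<in>U. \<forall>xs i. le a b \<longrightarrow> lists_in U m xs \<longrightarrow> i < m \<longrightarrow>
        le (f (xs[i := a])) (f (xs[i := b]))) \<and>
     (\<forall>a\<in>U. \<forall>b\<in>U. \<forall>ys j. le a b \<longrightarrow> lists_in U n ys \<longrightarrow> j < n \<longrightarrow>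
        le (g (ys[j := a])) (g (ys[j := b]))) \<and>
     (\<forall>a\<in>U. le zero a \<and> le a one)"

end

theory Submission
  imports Defs
begin

lemma rep_upd1:
  assumes "j < m"
  shows "(replicate (m - Suc j) c @ replicate (Suc j) d)[m - Suc j := c]
         = replicate (m - j) c @ replicate j d"
proof -
  have e: "m - j = Suc (m - Suc j)" using assms by simp
  have "(replicate (m - Suc j) c @ replicate (Suc j) d)[m - Suc j := c] = replicate (m - Suc j) c @ c # replicate j d"
    by (simp add: list_update_append)
  also have "\<dots> = replicate (m - j) c @ replicate j d"
    unfolding e by (simp add: replicate_append_same[symmetric] del: replicate_append_same)
  finally show ?thesis .
qed

lemma rep_upd2:
  assumes "j < m"
  shows "(replicate (m - Suc j) c @ replicate (Suc j) d)[m - Suc j := d]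
         = replicate (m - Suc j) c @ replicate (Suc j) d"
  by (simp add: list_update_append)

lemma chain:
  assumes mono: "\<And>xs i. lists_in U m xs \<Longrightarrow> i < m \<Longrightarrow> R (h (xs[i := a])) (h (xs[i := b]))"
    and trans: "\<And>x y z. x \<in> U \<Longrightarrow> y \<in> U \<Longrightarrow> z \<in> U \<Longrightarrow> R x y \<Longrightarrow> R y z \<Longrightarrow> R x z"
    and refl: "\<And>x. x \<in> U \<Longrightarrow> R x x"
    and cl: "\<And>xs. lists_in U m xs \<Longrightarrow> h xs \<in> U"
    and ab: "a \<in> U" "b \<in> U" "c \<in> U" "d \<in> U"
    and cd: "if up then c = a \<and> d = b else c = b \<and> d = a"
  shows "1 \<le> j \<Longrightarrow> j \<le> m \<Longrightarrow>
    (if up then R (h (replicate (m - 1) c @ [d])) (h (replicate (m - j) c @ replicate j d))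
     else R (h (replicate (m - j) c @ replicate j d)) (h (replicate (m - 1) c @ [d])))"
proof (induction j rule: dec_induct)
  case base
  have "h (replicate (m - 1) c @ [d]) \<in> U"
    using ab base by (intro cl) (auto simp: lists_in_def)
  then show ?case using refl by simp
next
  case (step j)
  let ?L = "replicate (m - Suc j) c @ replicate (Suc j) d"
  have L: "lists_in U m ?L" using ab step by (auto simp: lists_in_def)
  have j: "j < m" using step by simp
  have U1: "h (replicate (m - 1) c @ [d]) \<in> U"
    using ab step by (intro cl) (auto simp: lists_in_def)
  have U2: "h (replicate (m - j) c @ replicate j d) \<in> U"
    using ab step by (intro cl) (auto simp: lists_in_def)
  have U3: "h ?L \<in> U" using cl L by blast
  have mj: "m - Suc j < m" using j by simp
  show ?case
  proof (cases up)
    case True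
    then have cd2: "c = a" "d = b" using cd by auto
    have "R (h (?L[m - Suc j := c])) (h (?L[m - Suc j := d]))"
      using mono[OF L mj] cd2 by simp
    then have "R (h (replicate (m - j) c @ replicate j d)) (h ?L)"
      unfolding rep_upd1[OF j] rep_upd2[OF j] .
    moreover have "R (h (replicate (m - 1) c @ [d])) (h (replicate (m - j) c @ replicate j d))"
      using step.IH True j by simp
    ultimately show ?thesis using True trans[OF U1 U2 U3] by simp
  next
    case False
    then have "c = b" "d = a" using cd by auto
    have "R (h (?L[m - Suc j := d])) (h (?L[m - Suc j := c]))"
      using mono[OF L mj] \<open>c = b\<close> \<open>d = a\<close> by simp
    then have "R (h ?L) (h (replicate (m - j) c @ replicate j d))"
      unfolding rep_upd1[OF j] rep_upd2[OF j] .
    moreover have "R (h (replicate (m - j) c @ replicate j d)) (h (replicate (m - 1) c @ [d]))"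
      using step.IH False j by simp
    ultimately show ?thesis using False trans[OF U3 U2 U1] by simp
  qed
qed

theorem corollary4:
  fixes U :: "'a set" and m n k t :: nat
    and f g :: "'a list \<Rightarrow> 'a" and zero one :: 'a and le :: "'a \<Rightarrow> 'a \<Rightarrow> bool"
    and xs ys zs us :: "'a list"
  assumes "ft_po_semiring U m n f g zero one le"
    and "0 < k" and "k < m" and "0 < t" and "t < n"
    and "lists_in U m xs" and "lists_in U m ys"
    and "lists_in U n zs" and "lists_in U n us"
  shows "(le (f (replicate (m - k) zero @ replicate k (f xs))) (f ys) \<longrightarrow> le (f xs) (f ys)) \<and>
         (le (g zs) (g (replicate (n - t) one @ replicate t (g us))) \<longrightarrow> le (g zs) (g us))"
proof -
  note A = assms(1)[unfolded ft_po_semiring_def]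
  note M = A[THEN conjunct1, unfolded mn_semiring_def nary_closed_def]
  have z: "zero \<in> U" using A by (elim conjE)
  have o: "one \<in> U" using A by (elim conjE)
  have clf0: "\<forall>xs. lists_in U m xs \<longrightarrow> f xs \<in> U" using M by (elim conjE)
  have clg0: "\<forall>xs. lists_in U n xs \<longrightarrow> g xs \<in> U" using M by (elim conjE)
  have clf: "\<And>xs. lists_in U m xs \<Longrightarrow> f xs \<in> U" using clf0 by blast
  have clg: "\<And>xs. lists_in U n xs \<Longrightarrow> g xs \<in> U" using clg0 by blast
  have refl0: "\<forall>a\<in>U. le a a" using A by (elim conjE)
  have trans0: "\<forall>a\<in>U. \<forall>b\<in>U. \<forall>c\<in>U. le a b \<longrightarrow> le b c \<longrightarrow> le a c" using A by (elim conjE)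
  have refl: "\<And>x. x \<in> U \<Longrightarrow> le x x" using refl0 by blast
  have trans: "\<And>x y z. x \<in> U \<Longrightarrow> y \<in> U \<Longrightarrow> z \<in> U \<Longrightarrow> le x y \<Longrightarrow> le y z \<Longrightarrow> le x z"
    using trans0 by blast
  define a where "a = f xs"
  define b where "b = g us"
  have a: "a \<in> U" using clf assms(6) a_def by auto
  have b: "b \<in> U" using clg assms(9) b_def by auto
  have bnd: "\<forall>a\<in>U. le zero a \<and> le a one" using A by (elim conjE)
  have za: "le zero a" and bo: "le b one" using bnd a b by auto
  have mf0: "\<forall>a\<in>U. \<forall>b\<in>U. \<forall>xs i. le a b \<longrightarrow> lists_in U m xs \<longrightarrow> i < m \<longrightarrow>
        le (f (xs[i := a])) (f (xs[i := b]))" using A by (elim conjE)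
  have mg0: "\<forall>a\<in>U. \<forall>b\<in>U. \<forall>ys j. le a b \<longrightarrow> lists_in U n ys \<longrightarrow> j < n \<longrightarrow>
        le (g (ys[j := a])) (g (ys[j := b]))" using A by (elim conjE)
  have fid: "\<forall>x i. x \<in> U \<longrightarrow> i < m \<longrightarrow> f ((replicate m zero)[i := x]) = x" using A by (elim conjE)
  have gid: "\<forall>y j. y \<in> U \<longrightarrow> j < n \<longrightarrow> g ((replicate n one)[j := y]) = y" using A by (elim conjE)
  have monof: "\<And>xs i. lists_in U m xs \<Longrightarrow> i < m \<Longrightarrow> le (f (xs[i := zero])) (f (xs[i := a]))"
    using mf0 za a z by blast
  have monog: "\<And>xs i. lists_in U n xs \<Longrightarrow> i < n \<Longrightarrow> le (g (xs[i := b])) (g (xs[i := one]))"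
    using mg0 bo b o by blast
  have c1: "le (f (replicate (m - 1) zero @ [a])) (f (replicate (m - k) zero @ replicate k a))"
    using chain[where R=le and h=f and U=U and m=m and a=zero and b=a and c=zero and d=a and j=k and up=True,
        OF monof trans refl clf z a z a] assms(2,3) by auto
  have c2: "le (g (replicate (n - t) one @ replicate t b)) (g (replicate (n - 1) one @ [b]))"
    using chain[where R=le and h=g and U=U and m=n and a=b and b=one and c=one and d=b and j=t and up=False,
        OF monog trans refl clg b o o b] assms(4,5) by auto
  have ea: "f (replicate (m - 1) zero @ [a]) = a"
  proof -
    have "replicate (m - 1) zero @ [a] = (replicate m zero)[m - 1 := a]"
      using assms(3) by (cases m) (auto simp: list_update_append replicate_append_same[symmetric] simp del: replicate_append_same)
    moreover have "f ((replicate m zero)[m - 1 := a]) = a" using fid a assms(3) by simp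
    ultimately show ?thesis by (rule ssubst)
  qed
  have eb: "g (replicate (n - 1) one @ [b]) = b"
  proof -
    have "replicate (n - 1) one @ [b] = (replicate n one)[n - 1 := b]"
      using assms(5) by (cases n) (auto simp: list_update_append replicate_append_same[symmetric] simp del: replicate_append_same)
    moreover have "g ((replicate n one)[n - 1 := b]) = b" using gid b assms(5) by simp
    ultimately show ?thesis by (rule ssubst)
  qed
  have U1: "f (replicate (m - k) zero @ replicate k a) \<in> U"
    using z a assms(3) by (intro clf) (auto simp: lists_in_def)
  have U2: "g (replicate (n - t) one @ replicate t b) \<in> U"
    using o b assms(5) by (intro clg) (auto simp: lists_in_def)
  have fy: "f ys \<in> U" using clf assms(7) by auto
  have gz: "g zs \<in> U" using clg assms(8) by auto
  show ?thesis
    using c1 c2 ea eb trans[OF a U1 fy] trans[OF gz U2 b] a_def b_def by auto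
qed

end
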